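(* Let $n\ge2$, $f\in\mathbb R^n$, $Y=f+\xi$, where $\xi$ has independent coordinates satisfying, for some known $\sigma>0$ and all $i=1,\dots,n$, $$\log\mathbb E\big[e^{\lambda\xi_i}\big]\le\frac{\lambda^2\sigma^2}{2}\qquad\text{for all }\lambda\in\mathbb R.$$ Let $\{S_m: m\in\mathcal M\}$ be a countable nonempty collection of linear subspaces of $\mathbb R^n$ with $D_m=\dim S_m$. Let $\Delta_m\ge0$ satisfy $\Sigma=\sum_{m\in\mathcal M}e^{-\Delta_m}<\infty$, and let $K>1$. Let $\mathrm{pen}:\mathcal M\to\mathbb R_+$ satisfy $$\mathrm{pen}(m)\ge K\kappa^2\sigma^2(D_m+\Delta_m)\qquad\text{for all }m\in\mathcal M.$$ Let $\hat m$ be any minimizer over $\mathcal M$ of $\mathrm{crit}(m)=|Y-\hat f_m|_2^2+\mathrm{pen}(m)$, where $\hat f_m=\Pi_{S_m}Y$. Then $$\mathbb E\big[|f-\hat f_{\hat m}|_2^2\big]\le\frac{K(K^2+K-1)}{(K-1)^3}\inf_{m\in\mathcal M}\Big(\mathbb E\big[|f-\hat f_m|_2^2\big]+\mathrm{pen}(m)\Big)+\frac{K^3\kappa^2\sigma^2}{(K-1)^2}\Sigma.$$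
   Context: $|x|_2$ is the Euclidean norm on $\mathbb R^n$, $\Pi_S$ is the orthogonal projector onto a linear subspace $S$, and $\kappa=18$. *)

theory Defs
  imports "HOL-Probability.Probability"
begin

definition kappa :: real where "kappa = 18"

definition orth_proj :: "('a::euclidean_space) set \<Rightarrow> 'a \<Rightarrow> 'a" where
  "orth_proj S y = (THE p. p \<in> S \<and> (\<forall>v\<in>S. inner (y - p) v = 0))"

end

theory Submission
  imports Defs
begin
abbreviation "stdN \<equiv> density lborel std_normal_density"

lemma stdN_prob: "prob_space stdN"
  using prob_space_normal_density[of 1 0] by simp

lemma nn_normal_density_1: "s > 0 \<Longrightarrow> (\<integral>\<^sup>+x. ennreal (normal_density m s x) \<partial>lborel) = 1"
  by (subst nn_integral_eq_integral) auto

lemma gauss_mgf: "(\<integral>\<^sup>+x. ennreal (exp (c * x)) \<partial>stdN) = ennreal (exp (c\<^sup>2 / 2))"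
proof -
  have "(\<integral>\<^sup>+x. ennreal (exp (c * x)) \<partial>stdN) = (\<integral>\<^sup>+x. ennreal (std_normal_density x) * ennreal (exp (c * x)) \<partial>lborel)"
    by (subst nn_integral_density) auto
  also have "\<dots> = (\<integral>\<^sup>+x. ennreal (exp (c\<^sup>2 / 2)) * ennreal (normal_density c 1 x) \<partial>lborel)"
  proof (intro nn_integral_cong)
    fix x :: real
    have "std_normal_density x * exp (c * x) = exp (c\<^sup>2 / 2) * normal_density c 1 x"
    proof -
      have "exp (c * x) * exp (- x\<^sup>2 / 2) = exp (c\<^sup>2 / 2) * exp (-(x - c)\<^sup>2 / 2)"
        unfolding exp_add[symmetric] by (rule arg_cong[where f=exp]) (simp add: power2_eq_square field_simps)
      then show ?thesis unfolding normal_density_def by (simp add: std_normal_density_def mult.commute)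
    qed
    then show "ennreal (std_normal_density x) * ennreal (exp (c * x)) = ennreal (exp (c\<^sup>2 / 2)) * ennreal (normal_density c 1 x)"
      by (simp add: ennreal_mult[symmetric])
  qed
  also have "\<dots> = ennreal (exp (c\<^sup>2 / 2))"
    by (subst nn_integral_cmult) (auto simp: nn_normal_density_1)
  finally show ?thesis .
qed

lemma gauss_sq: "(\<integral>\<^sup>+x. ennreal (exp (x\<^sup>2 / 4)) \<partial>stdN) = ennreal (sqrt 2)"
proof -
  have "(\<integral>\<^sup>+x. ennreal (exp (x\<^sup>2/4)) \<partial>stdN) = (\<integral>\<^sup>+x. ennreal (std_normal_density x) * ennreal (exp (x\<^sup>2/4)) \<partial>lborel)"
    by (subst nn_integral_density) auto
  also have "\<dots> = (\<integral>\<^sup>+x. ennreal (sqrt 2) * ennreal (normal_density 0 (sqrt 2) x) \<partial>lborel)"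
  proof (intro nn_integral_cong)
    fix x :: real
    have "std_normal_density x * exp (x\<^sup>2/4) = sqrt 2 * normal_density 0 (sqrt 2) x"
    proof -
      have "exp (- x\<^sup>2 / 2) * exp (x\<^sup>2 / 4) = exp (-x\<^sup>2 / 4)"
        unfolding exp_add[symmetric] by (rule arg_cong[where f=exp]) simp
      moreover have "sqrt (2 * pi * (sqrt 2)\<^sup>2) = sqrt 2 * sqrt (2*pi)"
        by (simp add: real_sqrt_mult[symmetric])
      ultimately show ?thesis unfolding normal_density_def std_normal_density_def
        by (simp add: field_simps)
    qed
    then show "ennreal (std_normal_density x) * ennreal (exp (x\<^sup>2/4)) = ennreal (sqrt 2) * ennreal (normal_density 0 (sqrt 2) x)"
      by (simp add: ennreal_mult[symmetric])
  qed
  also have "\<dots> = ennreal (sqrt 2)"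
    by (subst nn_integral_cmult) (auto simp: nn_normal_density_1)
  finally show ?thesis .
qed

definition PB :: "('b::real_inner) set \<Rightarrow> 'b \<Rightarrow> 'b" where
  "PB B y = (\<Sum>u\<in>B. inner y u *\<^sub>R u)"

definition orthonormal :: "('b::real_inner) set \<Rightarrow> bool" where
  "orthonormal B \<longleftrightarrow> finite B \<and> pairwise orthogonal B \<and> (\<forall>u\<in>B. norm u = 1)"

lemma on_inner: assumes "orthonormal B" "u \<in> B" "u' \<in> B"
  shows "inner u' u = (if u' = u then 1 else 0)"
  using assms unfolding orthonormal_def pairwise_def orthogonal_def
  by (auto simp: norm_eq_1)

lemma sum_on_inner: assumes "orthonormal B" "u \<in> B"
  shows "(\<Sum>u'\<in>B. c u' * inner u' u) = c u"
proof -
  have fin: "finite B" using assms by (simp add: orthonormal_def)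
  have "(\<Sum>u'\<in>B. c u' * inner u' u) = (\<Sum>u'\<in>B. if u' = u then c u else 0)"
    by (intro sum.cong refl) (simp add: on_inner[OF assms(1,2)])
  also have "\<dots> = c u" using fin assms(2) by (simp add: sum.delta')
  finally show ?thesis .
qed

lemma PB_inner: assumes "orthonormal B" "u \<in> B"
  shows "inner (PB B y) u = inner y u"
  unfolding PB_def inner_sum_left inner_scaleR_left using sum_on_inner[OF assms] .

lemma PB_orth: assumes "orthonormal B" "u \<in> B"
  shows "inner (y - PB B y) u = 0"
  using PB_inner[OF assms] by (simp add: inner_diff_left)

lemma PB_orth2: assumes "orthonormal B"
  shows "inner (y - PB B y) (PB B z) = 0"
  unfolding PB_def[of B z] inner_sum_right inner_scaleR_right
  using PB_orth[OF assms] by simp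

lemma PB_norm2: assumes "orthonormal B"
  shows "(norm (PB B y))\<^sup>2 = (\<Sum>u\<in>B. (inner y u)\<^sup>2)"
proof -
  have "(norm (PB B y))\<^sup>2 = inner (PB B y) (PB B y)" by (simp add: power2_norm_eq_inner)
  also have "\<dots> = (\<Sum>u\<in>B. inner y u * inner (PB B y) u)"
    by (subst (2) PB_def) (simp add: inner_sum_right)
  also have "\<dots> = (\<Sum>u\<in>B. (inner y u)\<^sup>2)"
    by (intro sum.cong refl) (simp add: PB_inner[OF assms] power2_eq_square)
  finally show ?thesis .
qed

lemma PB_add: "PB B (y + z) = PB B y + PB B z"
  unfolding PB_def by (simp add: inner_add_left scaleR_add_left sum.distrib)

lemma PB_span: "PB B y \<in> span B"
  unfolding PB_def by (intro span_sum span_scale span_base)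

lemma orth_span:
  assumes "\<And>u. u \<in> B \<Longrightarrow> inner w u = 0" "v \<in> span B"
  shows "inner w v = 0"
proof -
  have "orthogonal w v"
    using span_induct[of v B "orthogonal w", OF assms(2)] subspace_orthogonal_to_vector[of w] assms(1)
    by (simp add: orthogonal_def)
  then show ?thesis by (simp add: orthogonal_def)
qed

lemma orth_proj_PB:
  fixes S :: "('b::euclidean_space) set"
  assumes "orthonormal B" "span B = S"
  shows "orth_proj S y = PB B y"
  unfolding orth_proj_def
proof (rule the_equality)
  have "\<forall>v\<in>span B. inner (y - PB B y) v = 0"
  proof
    fix v assume "v \<in> span B"
    then show "inner (y - PB B y) v = 0"
        using orth_span PB_orth[OF assms(1)] by blast
  qed
  then show "PB B y \<in> S \<and> (\<forall>v\<in>S. inner (y - PB B y) v = 0)"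
    using PB_span assms(2) by auto
next
  fix p assume p: "p \<in> S \<and> (\<forall>v\<in>S. inner (y - p) v = 0)"
  have ps: "PB B y \<in> S" "\<forall>v\<in>S. inner (y - PB B y) v = 0"
  proof -
    show "PB B y \<in> S" using PB_span assms(2) by auto
    show "\<forall>v\<in>S. inner (y - PB B y) v = 0"
    proof
      fix v assume "v \<in> S"
      then have "v \<in> span B" using assms(2) by simp
      then show "inner (y - PB B y) v = 0"
        using orth_span PB_orth[OF assms(1)] by blast
    qed
  qed
  have sub: "subspace S" using assms(2) subspace_span by blast
  have d: "p - PB B y \<in> S" using p ps(1) sub by (simp add: subspace_diff)
  have "inner (p - PB B y) (p - PB B y) = inner (y - PB B y) (p - PB B y) - inner (y - p) (p - PB B y)"
    by (simp add: inner_diff_left)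
  also have "\<dots> = 0" using p ps d by simp
  finally show "p = PB B y" by simp
qed

definition onb :: "('b::euclidean_space) set \<Rightarrow> 'b set" where
  "onb S = (SOME B. B \<subseteq> S \<and> pairwise orthogonal B \<and> (\<forall>x\<in>B. norm x = 1) \<and> independent B \<and> card B = dim S \<and> span B = S)"

lemma onb:
  fixes S :: "('b::euclidean_space) set"
  assumes "subspace S"
  shows "orthonormal (onb S)" "span (onb S) = S" "card (onb S) = dim S"
proof -
  have "\<exists>B. B \<subseteq> S \<and> pairwise orthogonal B \<and> (\<forall>x\<in>B. norm x = 1) \<and> independent B \<and> card B = dim S \<and> span B = S"
    using orthonormal_basis_subspace[OF assms] by metis
  then have h: "onb S \<subseteq> S \<and> pairwise orthogonal (onb S) \<and> (\<forall>x\<in>onb S. norm x = 1) \<and> independent (onb S) \<and> card (onb S) = dim S \<and> span (onb S) = S"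
    unfolding onb_def by (rule someI_ex)
  then show "orthonormal (onb S)" "span (onb S) = S" "card (onb S) = dim S"
    unfolding orthonormal_def using independent_imp_finite by auto
qed

lemma on_extend:
  assumes on: "orthonormal B" and orth: "\<And>u. u \<in> B \<Longrightarrow> inner v u = 0"
  defines "B' \<equiv> (if v = 0 then B else insert (v /\<^sub>R norm v) B)"
  shows "orthonormal B'" "card B' \<le> card B + 1"
    "(\<Sum>u\<in>B'. (inner y u)\<^sup>2) = (\<Sum>u\<in>B. (inner y u)\<^sup>2) + (inner v y)\<^sup>2 / (norm v)\<^sup>2"
proof -
  have fin: "finite B" using on by (simp add: orthonormal_def)
  show "card B' \<le> card B + 1" unfolding B'_def using fin by (auto simp: card_insert_if)
  show "orthonormal B'"
  proof (cases "v = 0")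
    case True then show ?thesis using on by (simp add: B'_def)
  next
    case False
    have "orthogonal (v /\<^sub>R norm v) u" "orthogonal u (v /\<^sub>R norm v)" if "u \<in> B" for u
      using orth[OF that] by (auto simp: orthogonal_def inner_commute)
    then show ?thesis using on False unfolding B'_def orthonormal_def
      by (auto simp: pairwise_insert)
  qed
  show "(\<Sum>u\<in>B'. (inner y u)\<^sup>2) = (\<Sum>u\<in>B. (inner y u)\<^sup>2) + (inner v y)\<^sup>2 / (norm v)\<^sup>2"
  proof (cases "v = 0")
    case True then show ?thesis by (simp add: B'_def)
  next
    case False
    have nin: "v /\<^sub>R norm v \<notin> B"
    proof
      assume "v /\<^sub>R norm v \<in> B"
      then have "inner v (v /\<^sub>R norm v) = 0" using orth by blast
      then show False using False by (simp add: power2_norm_eq_inner[symmetric] power2_eq_square)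
    qed
    have "(inner y (v /\<^sub>R norm v))\<^sup>2 = (inner v y)\<^sup>2 / (norm v)\<^sup>2"
      by (simp add: power_divide inner_commute field_simps)
    then show ?thesis using nin fin False by (simp add: B'_def)
  qed
qed

locale subg = prob_space M for M :: "'a measure" +
  fixes \<xi> :: "'a \<Rightarrow> real ^ 'n" and \<sigma> :: real
  assumes xi_meas[measurable]: "\<xi> \<in> borel_measurable M"
    and indep: "indep_vars (\<lambda>_. borel) (\<lambda>i \<omega>. \<xi> \<omega> $ i) UNIV"
    and sig: "\<sigma> > 0"
    and integ: "\<And>i l. integrable M (\<lambda>\<omega>. exp (l * \<xi> \<omega> $ i))"
    and mgf: "\<And>i l. ln (integral\<^sup>L M (\<lambda>\<omega>. exp (l * \<xi> \<omega> $ i))) \<le> l\<^sup>2 * \<sigma>\<^sup>2 / 2"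
begin

lemma mgf1: "integral\<^sup>L M (\<lambda>\<omega>. exp (l * \<xi> \<omega> $ i)) \<le> exp (l\<^sup>2 * \<sigma>\<^sup>2 / 2)"
proof -
  let ?I = "integral\<^sup>L M (\<lambda>\<omega>. exp (l * \<xi> \<omega> $ i))"
  have g0: "?I \<ge> 0" by (intro integral_nonneg_AE) auto
  have n0: "?I \<noteq> 0"
  proof
    assume "?I = 0"
    then have "AE \<omega> in M. exp (l * \<xi> \<omega> $ i) = 0"
      using integral_nonneg_eq_0_iff_AE[OF integ[of l i]] by auto
    then have "AE \<omega> in M. False" by simp
    then show False by (simp add: AE_False)
  qed
  have "?I > 0" using g0 n0 by linarith
  then have "?I = exp (ln ?I)" by simp
  also have "\<dots> \<le> exp (l\<^sup>2 * \<sigma>\<^sup>2 / 2)" using mgf by simp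
  finally show ?thesis .
qed

lemma lin_mgf:
  "(\<integral>\<^sup>+\<omega>. ennreal (exp (t * inner w (\<xi> \<omega>))) \<partial>M) \<le> ennreal (exp (t\<^sup>2 * \<sigma>\<^sup>2 * (norm w)\<^sup>2 / 2))"
proof -
  have eq: "ennreal (exp (t * inner w (\<xi> \<omega>))) = (\<Prod>i\<in>UNIV. ennreal (exp ((t * w $ i) * \<xi> \<omega> $ i)))" for \<omega>
    by (simp add: inner_vec_def sum_distrib_left exp_sum prod_ennreal mult.assoc)
  have "(\<integral>\<^sup>+\<omega>. ennreal (exp (t * inner w (\<xi> \<omega>))) \<partial>M)
      = (\<integral>\<^sup>+\<omega>. (\<Prod>i\<in>UNIV. ennreal (exp ((t * w $ i) * \<xi> \<omega> $ i))) \<partial>M)"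
    by (simp add: eq)
  also have "\<dots> = (\<Prod>i\<in>UNIV. \<integral>\<^sup>+\<omega>. ennreal (exp ((t * w $ i) * \<xi> \<omega> $ i)) \<partial>M)"
    by (intro indep_vars_nn_integral indep_vars_compose2[OF indep]) auto
  also have "\<dots> \<le> (\<Prod>i\<in>UNIV. ennreal (exp ((t * w $ i)\<^sup>2 * \<sigma>\<^sup>2 / 2)))"
  proof (intro prod_mono_ennreal)
    fix i :: 'n
    have "(\<integral>\<^sup>+\<omega>. ennreal (exp ((t * w $ i) * \<xi> \<omega> $ i)) \<partial>M)
        = ennreal (integral\<^sup>L M (\<lambda>\<omega>. exp ((t * w $ i) * \<xi> \<omega> $ i)))"
      by (intro nn_integral_eq_integral integ) auto
    also have "\<dots> \<le> ennreal (exp ((t * w $ i)\<^sup>2 * \<sigma>\<^sup>2 / 2))"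
      by (intro ennreal_leI mgf1)
    finally show "(\<integral>\<^sup>+\<omega>. ennreal (exp ((t * w $ i) * \<xi> \<omega> $ i)) \<partial>M) \<le> ennreal (exp ((t * w $ i)\<^sup>2 * \<sigma>\<^sup>2 / 2))" .
  qed
  also have "\<dots> = ennreal (exp (\<Sum>i\<in>UNIV. (t * w $ i)\<^sup>2 * \<sigma>\<^sup>2 / 2))"
    by (simp add: prod_ennreal exp_sum)
  also have "(\<Sum>i\<in>UNIV. (t * w $ i)\<^sup>2 * \<sigma>\<^sup>2 / 2) = t\<^sup>2 * \<sigma>\<^sup>2 * (norm w)\<^sup>2 / 2"
  proof -
    have "(norm w)\<^sup>2 = (\<Sum>i\<in>UNIV. (w $ i)\<^sup>2)"
      unfolding power2_norm_eq_inner inner_vec_def by (simp add: power2_eq_square)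
    then show ?thesis
      by (simp add: sum_distrib_left sum_divide_distrib power_mult_distrib algebra_simps)
  qed
  finally show ?thesis .
qed

end

lemma stdN_component[measurable]:
  "u \<in> B \<Longrightarrow> (\<lambda>g. g u) \<in> borel_measurable (PiM B (\<lambda>_. stdN))"
  using measurable_component_singleton[of u B "\<lambda>_. stdN"]
  by (simp add: measurable_cong_sets[OF refl sets_density] del: measurable_component_singleton)

lemma norm2_sum_on:
  assumes "orthonormal B"
  shows "(norm (\<Sum>u\<in>B. c u *\<^sub>R u))\<^sup>2 = (\<Sum>u\<in>B. (c u)\<^sup>2)"
proof -
  have "(norm (\<Sum>u\<in>B. c u *\<^sub>R u))\<^sup>2 = (\<Sum>u\<in>B. c u * (\<Sum>u'\<in>B. c u' * inner u' u))"
    unfolding power2_norm_eq_inner by (simp add: inner_sum_left inner_sum_right sum_distrib_left mult.assoc)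
  also have "\<dots> = (\<Sum>u\<in>B. (c u)\<^sup>2)"
    by (intro sum.cong refl) (simp add: sum_on_inner[OF assms] power2_eq_square)
  finally show ?thesis .
qed

context subg begin

lemma quad_mgf:
  assumes on: "orthonormal B"
  shows "(\<integral>\<^sup>+\<omega>. ennreal (exp ((\<Sum>u\<in>B. (inner u (\<xi> \<omega>))\<^sup>2) / (4 * \<sigma>\<^sup>2))) \<partial>M) \<le> ennreal (sqrt 2 ^ card B)"
proof -
  have fin: "finite B" using on by (simp add: orthonormal_def)
  define G where "G = PiM B (\<lambda>_. stdN)"
  interpret Pr: product_prob_space "\<lambda>_. stdN" B
    unfolding product_prob_space_def product_sigma_finite_def product_prob_space_axioms_def
    using stdN_prob prob_space_imp_sigma_finite by blast
  have pG: "prob_space G" unfolding G_def by (rule Pr.P.prob_space_axioms)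
  have psf: "pair_sigma_finite M G"
    unfolding pair_sigma_finite_def
    by (intro conjI prob_space_imp_sigma_finite pG prob_space_axioms)
  define t where "t = 1 / (\<sigma> * sqrt 2)"
  have t2: "t\<^sup>2 = 1 / (2 * \<sigma>\<^sup>2)" unfolding t_def by (simp add: power_divide power_mult_distrib)
  define H where "H \<omega> g = ennreal (exp (t * inner (\<Sum>u\<in>B. g u *\<^sub>R u) (\<xi> \<omega>)))" for \<omega> g
  have Hm: "case_prod H \<in> borel_measurable (M \<Otimes>\<^sub>M G)"
    unfolding H_def G_def by measurable
  have step1: "ennreal (exp ((\<Sum>u\<in>B. (inner u (\<xi> \<omega>))\<^sup>2) / (4 * \<sigma>\<^sup>2))) = (\<integral>\<^sup>+g. H \<omega> g \<partial>G)" for \<omega>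
  proof -
    have "(\<integral>\<^sup>+g. H \<omega> g \<partial>G) = (\<integral>\<^sup>+g. (\<Prod>u\<in>B. ennreal (exp ((t * inner u (\<xi> \<omega>)) * g u))) \<partial>G)"
      unfolding H_def
    proof (intro nn_integral_cong)
      fix g :: "real^'n \<Rightarrow> real"
      have "t * inner (\<Sum>u\<in>B. g u *\<^sub>R u) (\<xi> \<omega>) = (\<Sum>u\<in>B. (t * inner u (\<xi> \<omega>)) * g u)"
        by (simp add: inner_sum_left sum_distrib_left algebra_simps)
      then show "ennreal (exp (t * inner (\<Sum>u\<in>B. g u *\<^sub>R u) (\<xi> \<omega>))) = (\<Prod>u\<in>B. ennreal (exp ((t * inner u (\<xi> \<omega>)) * g u)))"
        by (simp add: exp_sum[OF fin] prod_ennreal)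
    qed
    also have "\<dots> = (\<Prod>u\<in>B. \<integral>\<^sup>+x. ennreal (exp ((t * inner u (\<xi> \<omega>)) * x)) \<partial>stdN)"
      unfolding G_def by (rule Pr.product_nn_integral_prod[OF fin]) auto
    also have "\<dots> = (\<Prod>u\<in>B. ennreal (exp ((t * inner u (\<xi> \<omega>))\<^sup>2 / 2)))"
      by (simp add: gauss_mgf)
    also have "\<dots> = ennreal (exp (\<Sum>u\<in>B. (t * inner u (\<xi> \<omega>))\<^sup>2 / 2))"
      by (simp add: prod_ennreal exp_sum[OF fin])
    also have "(\<Sum>u\<in>B. (t * inner u (\<xi> \<omega>))\<^sup>2 / 2) = (\<Sum>u\<in>B. (inner u (\<xi> \<omega>))\<^sup>2) / (4 * \<sigma>\<^sup>2)"
      by (simp add: power_mult_distrib t2 sum_divide_distrib)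
    finally show ?thesis by simp
  qed
  have "(\<integral>\<^sup>+\<omega>. ennreal (exp ((\<Sum>u\<in>B. (inner u (\<xi> \<omega>))\<^sup>2) / (4 * \<sigma>\<^sup>2))) \<partial>M)
      = (\<integral>\<^sup>+\<omega>. (\<integral>\<^sup>+g. H \<omega> g \<partial>G) \<partial>M)"
    by (simp add: step1)
  also have "\<dots> = (\<integral>\<^sup>+g. (\<integral>\<^sup>+\<omega>. H \<omega> g \<partial>M) \<partial>G)"
    using pair_sigma_finite.Fubini'[OF psf Hm] by simp
  also have "\<dots> \<le> (\<integral>\<^sup>+g. ennreal (exp (t\<^sup>2 * \<sigma>\<^sup>2 * (norm (\<Sum>u\<in>B. g u *\<^sub>R u))\<^sup>2 / 2)) \<partial>G)"
    unfolding H_def by (intro nn_integral_mono lin_mgf)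
  also have "\<dots> = (\<integral>\<^sup>+g. (\<Prod>u\<in>B. ennreal (exp ((g u)\<^sup>2 / 4))) \<partial>G)"
  proof (intro nn_integral_cong)
    fix g :: "real^'n \<Rightarrow> real"
    have "t\<^sup>2 * \<sigma>\<^sup>2 * (norm (\<Sum>u\<in>B. g u *\<^sub>R u))\<^sup>2 / 2 = (\<Sum>u\<in>B. (g u)\<^sup>2 / 4)"
      using sig by (simp add: norm2_sum_on[OF on] t2 sum_divide_distrib)
    then show "ennreal (exp (t\<^sup>2 * \<sigma>\<^sup>2 * (norm (\<Sum>u\<in>B. g u *\<^sub>R u))\<^sup>2 / 2)) = (\<Prod>u\<in>B. ennreal (exp ((g u)\<^sup>2 / 4)))"
      by (simp add: prod_ennreal exp_sum[OF fin])
  qed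
  also have "\<dots> = (\<Prod>u\<in>B. \<integral>\<^sup>+x. ennreal (exp (x\<^sup>2 / 4)) \<partial>stdN)"
    unfolding G_def by (rule Pr.product_nn_integral_prod[OF fin]) auto
  also have "\<dots> = ennreal (sqrt 2 ^ card B)"
    by (simp add: gauss_sq ennreal_power)
  finally show ?thesis .
qed

end

lemma small_le0:
  fixes x C :: real
  assumes "\<And>l. 0 < l \<Longrightarrow> l \<le> 1 \<Longrightarrow> x \<le> l * C" "C \<ge> 0"
  shows "x \<le> 0"
proof (rule ccontr)
  assume "\<not> x \<le> 0"
  then have x: "x > 0" by simp
  define l where "l = min 1 (x / (2 * C + 1))"
  have l: "0 < l" "l \<le> 1" using x assms(2) by (auto simp: l_def)
  have "l * C \<le> x / (2 * C + 1) * C"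
    using assms(2) by (intro mult_right_mono) (auto simp: l_def)
  also have "\<dots> < x"
  proof -
    have "0 \<le> C * x" using x assms(2) by simp
    then have "0 < x + C * x" using x by linarith
    then show ?thesis using x assms(2) by (simp add: field_simps)
  qed
  finally show False using assms(1)[OF l] by simp
qed

lemma expm1_le: "(y::real) \<ge> 0 \<Longrightarrow> exp y - 1 \<le> y * exp y"
proof -
  assume "y \<ge> 0"
  have "1 - y \<le> exp (- y)" using exp_ge_add_one_self[of "-y"] by simp
  then have "(1 - y) * exp y \<le> exp (-y) * exp y" by (intro mult_right_mono) auto
  then show ?thesis by (simp add: exp_minus field_simps)
qed

context subg begin

lemma xi_comp_meas[measurable]: "(\<lambda>\<omega>. \<xi> \<omega> $ i) \<in> borel_measurable M"
  by (rule measurable_compose[OF xi_meas borel_measurable_nth])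

lemma xi_integrable: "integrable M (\<lambda>\<omega>. \<xi> \<omega> $ i)"
proof -
  have i: "integrable M (\<lambda>\<omega>. exp (1 * \<xi> \<omega> $ i) + exp ((-1) * \<xi> \<omega> $ i))"
    by (intro Bochner_Integration.integrable_add integ)
  have ae: "AE \<omega> in M. norm (\<xi> \<omega> $ i) \<le> norm (exp (1 * \<xi> \<omega> $ i) + exp ((-1) * \<xi> \<omega> $ i))"
  proof (intro AE_I2)
    fix \<omega>
    have "\<bar>\<xi> \<omega> $ i\<bar> \<le> exp (\<xi> \<omega> $ i) + exp (- (\<xi> \<omega> $ i))"
      using exp_ge_add_one_self[of "\<xi> \<omega> $ i"] exp_ge_add_one_self[of "- (\<xi> \<omega> $ i)"]
        exp_gt_zero[of "\<xi> \<omega> $ i"] exp_gt_zero[of "- (\<xi> \<omega> $ i)"] by linarith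
    then show "norm (\<xi> \<omega> $ i) \<le> norm (exp (1 * \<xi> \<omega> $ i) + exp ((-1) * \<xi> \<omega> $ i))"
      by simp
  qed
  show ?thesis by (rule Bochner_Integration.integrable_bound[OF i xi_comp_meas ae])
qed

lemma xi_mean_bound:
  assumes "0 < l" "l \<le> 1" "c = 1 \<or> c = -1"
  shows "c * expectation (\<lambda>\<omega>. \<xi> \<omega> $ i) \<le> l * (\<sigma>\<^sup>2 / 2 * exp (\<sigma>\<^sup>2 / 2))"
proof -
  have c2: "c\<^sup>2 = 1" using assms(3) by auto
  have "1 + (l * c) * expectation (\<lambda>\<omega>. \<xi> \<omega> $ i) = expectation (\<lambda>\<omega>. 1 + (l * c) * \<xi> \<omega> $ i)"
    using xi_integrable by (simp add: prob_space)
  also have "\<dots> \<le> expectation (\<lambda>\<omega>. exp ((l * c) * \<xi> \<omega> $ i))"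
    by (intro integral_mono integ Bochner_Integration.integrable_add integrable_mult_right xi_integrable
        exp_ge_add_one_self) auto
  also have "\<dots> \<le> exp ((l * c)\<^sup>2 * \<sigma>\<^sup>2 / 2)" by (rule mgf1)
  also have "(l * c)\<^sup>2 * \<sigma>\<^sup>2 / 2 = l\<^sup>2 * \<sigma>\<^sup>2 / 2" by (simp add: power_mult_distrib c2)
  finally have "l * (c * expectation (\<lambda>\<omega>. \<xi> \<omega> $ i)) \<le> exp (l\<^sup>2 * \<sigma>\<^sup>2 / 2) - 1"
    by (simp add: algebra_simps)
  also have "\<dots> \<le> (l\<^sup>2 * \<sigma>\<^sup>2 / 2) * exp (l\<^sup>2 * \<sigma>\<^sup>2 / 2)" by (rule expm1_le) simp
  also have "\<dots> \<le> (l\<^sup>2 * \<sigma>\<^sup>2 / 2) * exp (\<sigma>\<^sup>2 / 2)"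
  proof -
    have "l\<^sup>2 \<le> 1" using assms by (simp add: power_le_one)
    then have "l\<^sup>2 * \<sigma>\<^sup>2 \<le> 1 * \<sigma>\<^sup>2" by (intro mult_right_mono) auto
    then have "l\<^sup>2 * \<sigma>\<^sup>2 / 2 \<le> \<sigma>\<^sup>2 / 2" by simp
    then show ?thesis by (intro mult_left_mono) auto
  qed
  finally have "l * (c * expectation (\<lambda>\<omega>. \<xi> \<omega> $ i)) \<le> l * (l * (\<sigma>\<^sup>2 / 2 * exp (\<sigma>\<^sup>2 / 2)))"
    by (simp add: power2_eq_square algebra_simps)
  then have "c * expectation (\<lambda>\<omega>. \<xi> \<omega> $ i) \<le> l * (\<sigma>\<^sup>2 / 2 * exp (\<sigma>\<^sup>2 / 2))"
    using assms(1) by simp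
  then show ?thesis .
qed

lemma xi_mean: "expectation (\<lambda>\<omega>. \<xi> \<omega> $ i) = 0"
proof -
  have "1 * expectation (\<lambda>\<omega>. \<xi> \<omega> $ i) \<le> 0"
    by (rule small_le0[OF xi_mean_bound]) auto
  moreover have "(-1) * expectation (\<lambda>\<omega>. \<xi> \<omega> $ i) \<le> 0"
    by (rule small_le0[OF xi_mean_bound]) auto
  ultimately show ?thesis by simp
qed

lemma inner_integrable: "integrable M (\<lambda>\<omega>. inner v (\<xi> \<omega>))"
  unfolding inner_vec_def inner_real_def by (intro Bochner_Integration.integrable_sum Bochner_Integration.integrable_mult_right xi_integrable)

lemma inner_mean: "expectation (\<lambda>\<omega>. inner v (\<xi> \<omega>)) = 0"
  unfolding inner_vec_def inner_real_def
  by (subst Bochner_Integration.integral_sum) (simp_all add: xi_integrable xi_mean)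

lemma Q_meas[measurable]: "(\<lambda>\<omega>. \<Sum>u\<in>B. (inner u (\<xi> \<omega>))\<^sup>2) \<in> borel_measurable M"
  by measurable

lemma Q_integrable:
  assumes on: "orthonormal B"
  shows "integrable M (\<lambda>\<omega>. \<Sum>u\<in>B. (inner u (\<xi> \<omega>))\<^sup>2)"
proof (rule integrableI_bounded)
  let ?Q = "\<lambda>\<omega>. \<Sum>u\<in>B. (inner u (\<xi> \<omega>))\<^sup>2"
  define s where "s = 4 * \<sigma>\<^sup>2"
  have s: "s > 0" using sig by (simp add: s_def)
  have "(\<integral>\<^sup>+\<omega>. ennreal (norm (?Q \<omega>)) \<partial>M) \<le> (\<integral>\<^sup>+\<omega>. ennreal s * ennreal (exp (?Q \<omega> / (4 * \<sigma>\<^sup>2))) \<partial>M)"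
  proof (intro nn_integral_mono)
    fix \<omega>
    have q0: "?Q \<omega> \<ge> 0" by (intro sum_nonneg) auto
    have "?Q \<omega> / s \<le> exp (?Q \<omega> / s)"
      using exp_ge_add_one_self[of "?Q \<omega> / s"] by linarith
    then have "?Q \<omega> \<le> s * exp (?Q \<omega> / s)" using s by (simp add: field_simps)
    then show "ennreal (norm (?Q \<omega>)) \<le> ennreal s * ennreal (exp (?Q \<omega> / (4 * \<sigma>\<^sup>2)))"
      using q0 s by (simp add: ennreal_mult[symmetric] s_def ennreal_leI)
  qed
  also have "\<dots> = ennreal s * (\<integral>\<^sup>+\<omega>. ennreal (exp (?Q \<omega> / (4 * \<sigma>\<^sup>2))) \<partial>M)"
    by (rule nn_integral_cmult) measurable
  also have "\<dots> \<le> ennreal s * ennreal (sqrt 2 ^ card B)"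
    by (intro mult_left_mono quad_mgf on) auto
  also have "\<dots> < \<infinity>" by (simp add: ennreal_mult_less_top)
  finally show "(\<integral>\<^sup>+\<omega>. ennreal (norm (?Q \<omega>)) \<partial>M) < \<infinity>" .
qed simp

lemma Q_tail:
  assumes on: "orthonormal B" and card: "card B \<le> d + 1" and D: "\<Delta> \<ge> 0"
  shows "(\<integral>\<^sup>+\<omega>. ennreal ((\<Sum>u\<in>B. (inner u (\<xi> \<omega>))\<^sup>2) - 324 * \<sigma>\<^sup>2 * (real d + \<Delta>)) \<partial>M)
           \<le> ennreal (4 * \<sigma>\<^sup>2 * exp (- \<Delta>))"
proof -
  let ?Q = "\<lambda>\<omega>. \<Sum>u\<in>B. (inner u (\<xi> \<omega>))\<^sup>2"
  define s where "s = 4 * \<sigma>\<^sup>2"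
  define T where "T = 324 * \<sigma>\<^sup>2 * (real d + \<Delta>)"
  define A where "A = s * exp (-1) * exp (- (T / s))"
  have s: "s > 0" using sig by (simp add: s_def)
  have A: "A \<ge> 0" by (simp add: A_def s_def)
  have "(\<integral>\<^sup>+\<omega>. ennreal (?Q \<omega> - T) \<partial>M) \<le> (\<integral>\<^sup>+\<omega>. ennreal A * ennreal (exp (?Q \<omega> / (4 * \<sigma>\<^sup>2))) \<partial>M)"
  proof (intro nn_integral_mono)
    fix \<omega>
    have "(?Q \<omega> - T) / s \<le> exp ((?Q \<omega> - T) / s - 1)"
      using exp_ge_add_one_self[of "(?Q \<omega> - T) / s - 1"] by linarith
    also have "exp ((?Q \<omega> - T) / s - 1) = exp (-1) * exp (- (T / s)) * exp (?Q \<omega> / s)"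
      by (simp add: exp_add[symmetric] diff_divide_distrib)
    finally have "?Q \<omega> - T \<le> A * exp (?Q \<omega> / s)"
      using s by (simp add: A_def field_simps)
    then show "ennreal (?Q \<omega> - T) \<le> ennreal A * ennreal (exp (?Q \<omega> / (4 * \<sigma>\<^sup>2)))"
      using A by (simp add: ennreal_mult[symmetric] s_def ennreal_leI)
  qed
  also have "\<dots> = ennreal A * (\<integral>\<^sup>+\<omega>. ennreal (exp (?Q \<omega> / (4 * \<sigma>\<^sup>2))) \<partial>M)"
    by (rule nn_integral_cmult) measurable
  also have "\<dots> \<le> ennreal A * ennreal (sqrt 2 ^ card B)"
    by (intro mult_left_mono quad_mgf on) auto
  also have "\<dots> = ennreal (A * sqrt 2 ^ card B)" using A by (simp add: ennreal_mult)
  also have "A * sqrt 2 ^ card B \<le> 4 * \<sigma>\<^sup>2 * exp (- \<Delta>)"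
  proof -
    have "sqrt 2 \<le> exp 1"
    proof -
      have "sqrt 2 \<le> (2::real)" by (rule real_le_lsqrt) auto
      also have "2 \<le> exp (1::real)" using exp_ge_add_one_self[of 1] by simp
      finally show ?thesis .
    qed
    then have "sqrt 2 ^ card B \<le> exp 1 ^ card B" by (intro power_mono) auto
    also have "\<dots> \<le> exp 1 ^ (d + 1)" by (intro power_increasing card) auto
    also have "\<dots> = exp (real d + 1)" by (simp add: exp_of_nat_mult[symmetric] exp_add algebra_simps)
    finally have p: "sqrt 2 ^ card B \<le> exp (real d + 1)" .
    have "A * sqrt 2 ^ card B \<le> A * exp (real d + 1)" by (intro mult_left_mono p A)
    also have "A * exp (real d + 1) = s * exp (- 80 * real d - 81 * \<Delta>)"
    proof -
      have "T / s = 81 * (real d + \<Delta>)" using sig by (simp add: T_def s_def field_simps)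
      then show ?thesis unfolding A_def by (simp add: mult_exp_exp algebra_simps)
    qed
    also have "\<dots> \<le> s * exp (- \<Delta>)" using s D by (intro mult_left_mono) auto
    finally show ?thesis by (simp add: s_def)
  qed
  finally show ?thesis unfolding T_def by (simp add: ennreal_leI)
qed

end

lemma norm_diff_sq: "(norm (a - b))\<^sup>2 = (norm a)\<^sup>2 - 2 * inner a b + (norm (b::'b::real_inner))\<^sup>2"
  by (simp add: power2_norm_eq_inner inner_diff_left inner_diff_right inner_commute)

lemma norm_add_sq: "(norm (a + b))\<^sup>2 = (norm a)\<^sup>2 + 2 * inner a b + (norm (b::'b::real_inner))\<^sup>2"
  by (simp add: power2_norm_eq_inner inner_add_left inner_add_right inner_commute)

lemma PB_decomp1:
  assumes on: "orthonormal B"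
  shows "(norm (f - PB B (f + x)))\<^sup>2 = (norm (f - PB B f))\<^sup>2 + (\<Sum>u\<in>B. (inner u x)\<^sup>2)"
proof -
  have "f - PB B (f + x) = (f - PB B f) - PB B x" by (simp add: PB_add)
  then have "(norm (f - PB B (f + x)))\<^sup>2 = (norm (f - PB B f))\<^sup>2 - 2 * inner (f - PB B f) (PB B x) + (norm (PB B x))\<^sup>2"
    by (simp only: norm_diff_sq)
  also have "inner (f - PB B f) (PB B x) = 0" by (rule PB_orth2[OF on])
  also have "(norm (PB B x))\<^sup>2 = (\<Sum>u\<in>B. (inner u x)\<^sup>2)" by (simp add: PB_norm2[OF on] inner_commute)
  finally show ?thesis by simp
qed

lemma PB_decomp2:
  assumes on: "orthonormal B"
  shows "(norm ((f + x) - PB B (f + x)))\<^sup>2 = (norm (f - PB B f))\<^sup>2 + 2 * inner (f - PB B f) x + (norm x)\<^sup>2 - (\<Sum>u\<in>B. (inner u x)\<^sup>2)"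
proof -
  let ?v = "f - PB B f" and ?w = "x - PB B x"
  have e: "(f + x) - PB B (f + x) = ?v + ?w" by (simp add: PB_add)
  have o1: "inner ?v (PB B x) = 0" by (rule PB_orth2[OF on])
  have o2: "inner ?w (PB B x) = 0" by (rule PB_orth2[OF on])
  have n: "(norm (PB B x))\<^sup>2 = (\<Sum>u\<in>B. (inner u x)\<^sup>2)" by (simp add: PB_norm2[OF on] inner_commute)
  have "(norm (?v + ?w))\<^sup>2 = (norm ?v)\<^sup>2 + 2 * inner ?v ?w + (norm ?w)\<^sup>2"
    by (rule norm_add_sq)
  moreover have "inner ?v ?w = inner ?v x" using o1 by (simp add: inner_diff_right)
  moreover have "(norm ?w)\<^sup>2 = (norm x)\<^sup>2 - (norm (PB B x))\<^sup>2"
  proof -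
    have "inner x (PB B x) = (norm (PB B x))\<^sup>2"
      using o2 by (simp add: inner_diff_left power2_norm_eq_inner)
    then show ?thesis
      by (simp add: norm_diff_sq inner_commute)
  qed
  ultimately show ?thesis unfolding e using n by simp
qed

lemma amgm_aux:
  fixes b x K :: real
  assumes "K > 0" "b \<ge> 0" "b = 0 \<Longrightarrow> x = 0"
  shows "- 2 * x \<le> b / K + K * x\<^sup>2 / b"
proof (cases "b = 0")
  case True then show ?thesis using assms by simp
next
  case False
  then have b: "b > 0" using assms by simp
  have "0 \<le> (b + K * x)\<^sup>2 / (K * b)" using b assms by simp
  also have "(b + K * x)\<^sup>2 / (K * b) = b / K + K * x\<^sup>2 / b + 2 * x"
    using b assms(1) by (simp add: power2_eq_square field_simps)
  finally show ?thesis by simp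
qed

lemma point_le_count:
  assumes "a \<in> A"
  shows "f a \<le> (\<integral>\<^sup>+x. f x \<partial>count_space A)"
proof -
  have "f a = (\<integral>\<^sup>+x. f x \<partial>count_space {a})" by (simp add: nn_integral_count_space_finite)
  also have "\<dots> = (\<integral>\<^sup>+x. f x * indicator {a} x \<partial>count_space UNIV)"
    by (rule nn_integral_count_space_indicator) simp
  also have "\<dots> \<le> (\<integral>\<^sup>+x. f x * indicator A x \<partial>count_space UNIV)"
    using assms by (intro nn_integral_mono) (auto split: split_indicator)
  also have "\<dots> = (\<integral>\<^sup>+x. f x \<partial>count_space A)"
  proof (cases "A = UNIV")
    case True then show ?thesis by simp
  next
    case False then show ?thesis
      by (subst nn_integral_count_space_indicator[of A]) (auto simp: NO_MATCH_def)
  qed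
  finally show ?thesis .
qed

lemma count_infsum:
  fixes g :: "'m \<Rightarrow> real"
  assumes "g summable_on A" "\<And>x. x \<in> A \<Longrightarrow> g x \<ge> 0"
  shows "(\<integral>\<^sup>+x. ennreal (g x) \<partial>count_space A) = ennreal (infsum g A)"
proof -
  note a = abs_summable_equivalent[THEN iffD1, OF summable_on_iff_abs_summable_on_real[THEN iffD1, OF assms(1)]]
  show ?thesis using nn_integral_conv_infsetsum[OF a assms(2)] infsetsum_infsum[OF a] by simp
qed

theorem mainTheorem7:
  fixes M :: "'a measure"
    and f :: "real ^ 'n"
    and \<xi> Y :: "'a \<Rightarrow> real ^ 'n"
    and \<sigma> K :: real
    and \<M> :: "'m set"
    and S :: "'m \<Rightarrow> (real ^ 'n) set"
    and \<Delta> pen :: "'m \<Rightarrow> real"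
    and mhat :: "'a \<Rightarrow> 'm"
  assumes "prob_space M"
    and "CARD('n) \<ge> 2"
    and "\<xi> \<in> borel_measurable M"
    and "prob_space.indep_vars M (\<lambda>_. borel) (\<lambda>i \<omega>. \<xi> \<omega> $ i) UNIV"
    and "\<sigma> > 0"
    and "\<And>i l. integrable M (\<lambda>\<omega>. exp (l * \<xi> \<omega> $ i))"
    and "\<And>i l. ln (integral\<^sup>L M (\<lambda>\<omega>. exp (l * \<xi> \<omega> $ i))) \<le> l\<^sup>2 * \<sigma>\<^sup>2 / 2"
    and "\<And>\<omega>. Y \<omega> = f + \<xi> \<omega>"
    and "countable \<M>" and "\<M> \<noteq> {}"
    and "\<And>m. m \<in> \<M> \<Longrightarrow> subspace (S m)"
    and "\<And>m. m \<in> \<M> \<Longrightarrow> \<Delta> m \<ge> 0"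
    and "(\<lambda>m. exp (- \<Delta> m)) summable_on \<M>"
    and "K > 1"
    and "\<And>m. m \<in> \<M> \<Longrightarrow> pen m \<ge> 0"
    and "\<And>m. m \<in> \<M> \<Longrightarrow> pen m \<ge> K * kappa\<^sup>2 * \<sigma>\<^sup>2 * (real (dim (S m)) + \<Delta> m)"
    and "\<And>\<omega>. mhat \<omega> \<in> \<M>"
    and "\<And>\<omega> m. m \<in> \<M> \<Longrightarrow>
           (norm (Y \<omega> - orth_proj (S (mhat \<omega>)) (Y \<omega>)))\<^sup>2 + pen (mhat \<omega>)
             \<le> (norm (Y \<omega> - orth_proj (S m) (Y \<omega>)))\<^sup>2 + pen m"
    and "(\<lambda>\<omega>. (norm (f - orth_proj (S (mhat \<omega>)) (Y \<omega>)))\<^sup>2) \<in> borel_measurable M"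
  shows "(\<integral>\<^sup>+ \<omega>. ennreal ((norm (f - orth_proj (S (mhat \<omega>)) (Y \<omega>)))\<^sup>2) \<partial>M)
           \<le> ennreal (K * (K\<^sup>2 + K - 1) / (K - 1) ^ 3
                  * (\<Sqinter>m\<in>\<M>. integral\<^sup>L M (\<lambda>\<omega>. (norm (f - orth_proj (S m) (Y \<omega>)))\<^sup>2) + pen m)
                + K ^ 3 * kappa\<^sup>2 * \<sigma>\<^sup>2 / (K - 1)\<^sup>2 * infsum (\<lambda>m. exp (- \<Delta> m)) \<M>)"
proof -
  interpret subg M \<xi> \<sigma>
    unfolding subg_def subg_axioms_def using assms(1,3,4,5,6,7) by blast
  have Kpos: "K > 0" using assms(14) by simp
  have sig2: "\<sigma>\<^sup>2 > 0" using assms(5) by simp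
  have kap: "kappa\<^sup>2 = 324" by (simp add: kappa_def)
  define B where "B m = onb (S m)" for m
  have onB: "orthonormal (B m)" "span (B m) = S m" "card (B m) = dim (S m)" if "m \<in> \<M>" for m
    using onb[OF assms(11)[OF that]] by (auto simp: B_def)
  have proj: "orth_proj (S m) y = PB (B m) y" if "m \<in> \<M>" for m y
    using orth_proj_PB[OF onB(1,2)[OF that]] by simp
  define v where "v m = f - PB (B m) f" for m
  define b where "b m = (norm (v m))\<^sup>2" for m
  define Q where "Q m \<omega> = (\<Sum>u\<in>B m. (inner u (\<xi> \<omega>))\<^sup>2)" for m \<omega>
  define Z where "Z m \<omega> = Q m \<omega> + (inner (v m) (\<xi> \<omega>))\<^sup>2 / b m" for m \<omega>
  define L where "L m \<omega> = (norm (f - orth_proj (S m) (Y \<omega>)))\<^sup>2" for m \<omega>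
  define \<Sigma> where "\<Sigma> = infsum (\<lambda>m. exp (- \<Delta> m)) \<M>"
  have \<Sigma>0: "\<Sigma> \<ge> 0" unfolding \<Sigma>_def by (intro infsum_nonneg) auto
  have Leq: "L m \<omega> = b m + Q m \<omega>" if "m \<in> \<M>" for m \<omega>
    using PB_decomp1[OF onB(1)[OF that], of f "\<xi> \<omega>"]
    by (simp add: L_def b_def v_def Q_def proj[OF that] assms(8))
  have Ceq: "(norm (Y \<omega> - orth_proj (S m) (Y \<omega>)))\<^sup>2 = b m + 2 * inner (v m) (\<xi> \<omega>) + (norm (\<xi> \<omega>))\<^sup>2 - Q m \<omega>"
    if "m \<in> \<M>" for m \<omega>
    using PB_decomp2[OF onB(1)[OF that], of f "\<xi> \<omega>"]
    by (simp add: b_def v_def Q_def proj[OF that] assms(8))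
  have Q0: "Q m \<omega> \<ge> 0" for m \<omega> unfolding Q_def by (intro sum_nonneg) auto
  have b0: "b m \<ge> 0" for m by (simp add: b_def)
  have vz: "b m = 0 \<Longrightarrow> v m = 0" for m by (simp add: b_def)
  have Zext: "\<exists>B'. orthonormal B' \<and> card B' \<le> dim (S m) + 1 \<and> (\<forall>\<omega>. Z m \<omega> = (\<Sum>u\<in>B'. (inner u (\<xi> \<omega>))\<^sup>2))"
    if m: "m \<in> \<M>" for m
  proof -
    have orth: "inner (v m) u = 0" if "u \<in> B m" for u
      unfolding v_def by (rule PB_orth[OF onB(1)[OF m] that])
    note E = on_extend[OF onB(1)[OF m] orth]
    let ?B' = "if v m = 0 then B m else insert (v m /\<^sub>R norm (v m)) (B m)"
    show ?thesis
    proof (intro exI conjI allI)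
      show "orthonormal ?B'" using E(1) .
      show "card ?B' \<le> dim (S m) + 1" using E(2) onB(3)[OF m] by simp
      fix \<omega>
      show "Z m \<omega> = (\<Sum>u\<in>?B'. (inner u (\<xi> \<omega>))\<^sup>2)"
        using E(3)[of "\<xi> \<omega>"] by (simp add: Z_def Q_def b_def inner_commute)
    qed
  qed
  have Zmeas[measurable]: "(\<lambda>\<omega>. Z m \<omega>) \<in> borel_measurable M" for m
    unfolding Z_def Q_def by measurable
  have enn_meas: "(\<lambda>\<omega>. ennreal (h \<omega>)) \<in> borel_measurable M" if "h \<in> borel_measurable M" for h
    by (rule measurable_compose[OF that measurable_ennreal])
  have tail: "(\<integral>\<^sup>+\<omega>. ennreal (K * Z m \<omega> - pen m) \<partial>M) \<le> ennreal (K * (4 * \<sigma>\<^sup>2 * exp (- \<Delta> m)))"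
    if m: "m \<in> \<M>" for m
  proof -
    obtain B' where B': "orthonormal B'" "card B' \<le> dim (S m) + 1"
      and ZB: "\<And>\<omega>. Z m \<omega> = (\<Sum>u\<in>B'. (inner u (\<xi> \<omega>))\<^sup>2)"
      using Zext[OF m] by blast
    define T where "T = 324 * \<sigma>\<^sup>2 * (real (dim (S m)) + \<Delta> m)"
    have penT: "pen m \<ge> K * T" using assms(16)[OF m] by (simp add: T_def kap mult_ac)
    have "(\<integral>\<^sup>+\<omega>. ennreal (K * Z m \<omega> - pen m) \<partial>M) \<le> (\<integral>\<^sup>+\<omega>. ennreal K * ennreal (Z m \<omega> - T) \<partial>M)"
    proof (intro nn_integral_mono)
      fix \<omega>
      have "K * Z m \<omega> - pen m \<le> K * (Z m \<omega> - T)" using penT by (simp add: algebra_simps)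
      then have "ennreal (K * Z m \<omega> - pen m) \<le> ennreal (K * (Z m \<omega> - T))" by (rule ennreal_leI)
      then show "ennreal (K * Z m \<omega> - pen m) \<le> ennreal K * ennreal (Z m \<omega> - T)"
        using Kpos by (simp add: ennreal_mult')
    qed
    also have "\<dots> = ennreal K * (\<integral>\<^sup>+\<omega>. ennreal (Z m \<omega> - T) \<partial>M)"
      by (intro nn_integral_cmult enn_meas borel_measurable_diff Zmeas borel_measurable_const)
    also have "(\<integral>\<^sup>+\<omega>. ennreal (Z m \<omega> - T) \<partial>M) \<le> ennreal (4 * \<sigma>\<^sup>2 * exp (- \<Delta> m))"
      unfolding ZB T_def by (rule Q_tail[OF B'(1) B'(2) assms(12)[OF m]])
    finally show ?thesis using Kpos by (simp add: ennreal_mult' mult_left_mono)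
  qed
  define g where "g m \<omega> = ennreal (K * Z m \<omega> - pen m)" for m \<omega>
  define G where "G \<omega> = (\<integral>\<^sup>+m. g m \<omega> \<partial>count_space \<M>)" for \<omega>
  have gmeas[measurable]: "g m \<in> borel_measurable M" for m unfolding g_def
    by (intro enn_meas borel_measurable_diff borel_measurable_times Zmeas borel_measurable_const)
  have Gmeas[measurable]: "G \<in> borel_measurable M"
  proof -
    have sf: "sigma_finite_measure (count_space \<M>)"
      by (rule sigma_finite_measure_count_space_countable[OF assms(9)])
    have "(\<lambda>(m, \<omega>). g m \<omega>) \<in> borel_measurable (count_space \<M> \<Otimes>\<^sub>M M)"
      by (rule measurable_pair_measure_countable1[OF assms(9)]) simp
    then have "(\<lambda>(\<omega>, m). g m \<omega>) \<in> borel_measurable (M \<Otimes>\<^sub>M count_space \<M>)"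
      using measurable_pair_swap by fastforce
    then show ?thesis unfolding G_def
      by (rule sigma_finite_measure.borel_measurable_nn_integral[OF sf, of "\<lambda>\<omega> m. g m \<omega>", simplified])
  qed
  have intG: "(\<integral>\<^sup>+\<omega>. G \<omega> \<partial>M) \<le> ennreal (4 * K * \<sigma>\<^sup>2 * \<Sigma>)"
  proof -
    have "(\<integral>\<^sup>+\<omega>. G \<omega> \<partial>M) = (\<integral>\<^sup>+m. (\<integral>\<^sup>+\<omega>. g m \<omega> \<partial>M) \<partial>count_space \<M>)"
      unfolding G_def by (rule nn_integral_count_space_nn_integral[OF assms(9)]) simp
    also have "\<dots> \<le> (\<integral>\<^sup>+m. ennreal (4 * K * \<sigma>\<^sup>2) * ennreal (exp (- \<Delta> m)) \<partial>count_space \<M>)"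
    proof (intro nn_integral_mono)
      fix m assume "m \<in> space (count_space \<M>)"
      then have m: "m \<in> \<M>" by simp
      have "(\<integral>\<^sup>+\<omega>. g m \<omega> \<partial>M) \<le> ennreal (K * (4 * \<sigma>\<^sup>2 * exp (- \<Delta> m)))"
        unfolding g_def by (rule tail[OF m])
      also have "\<dots> = ennreal (4 * K * \<sigma>\<^sup>2) * ennreal (exp (- \<Delta> m))"
        using Kpos by (simp add: ennreal_mult[symmetric] mult_ac)
      finally show "(\<integral>\<^sup>+\<omega>. g m \<omega> \<partial>M) \<le> ennreal (4 * K * \<sigma>\<^sup>2) * ennreal (exp (- \<Delta> m))" .
    qed
    also have "\<dots> = ennreal (4 * K * \<sigma>\<^sup>2) * (\<integral>\<^sup>+m. ennreal (exp (- \<Delta> m)) \<partial>count_space \<M>)"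
      by (rule nn_integral_cmult) simp
    also have "(\<integral>\<^sup>+m. ennreal (exp (- \<Delta> m)) \<partial>count_space \<M>) = ennreal \<Sigma>"
      unfolding \<Sigma>_def by (rule count_infsum[OF assms(13)]) simp
    also have "ennreal (4 * K * \<sigma>\<^sup>2) * ennreal \<Sigma> = ennreal (4 * K * \<sigma>\<^sup>2 * \<Sigma>)"
      using Kpos \<Sigma>0 by (simp add: ennreal_mult)
    finally show ?thesis .
  qed
  define Lh where "Lh \<omega> = L (mhat \<omega>) \<omega>" for \<omega>
  have Lheq: "Lh = (\<lambda>\<omega>. (norm (f - orth_proj (S (mhat \<omega>)) (Y \<omega>)))\<^sup>2)"
    by (rule ext) (simp only: Lh_def L_def)
  have Lhmeas[measurable]: "Lh \<in> borel_measurable M"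
    unfolding Lheq by (rule assms(19))
  have Lh0: "Lh \<omega> \<ge> 0" for \<omega> by (simp add: Lh_def L_def)
  have det: "(1 - 1/K) * Lh \<omega> \<le> b m0 + pen m0 + 2 * inner (v m0) (\<xi> \<omega>) + (K * Z (mhat \<omega>) \<omega> - pen (mhat \<omega>))"
    if m0: "m0 \<in> \<M>" for m0 \<omega>
  proof -
    define mh where "mh = mhat \<omega>"
    have mh: "mh \<in> \<M>" using assms(17) by (simp add: mh_def)
    define x where "x = inner (v mh) (\<xi> \<omega>)"
    define X where "X = inner (v m0) (\<xi> \<omega>)"
    have crit: "b mh + 2 * x + (norm (\<xi> \<omega>))\<^sup>2 - Q mh \<omega> + pen mh \<le> b m0 + 2 * X + (norm (\<xi> \<omega>))\<^sup>2 - Q m0 \<omega> + pen m0"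
      using assms(18)[OF m0, of \<omega>] Ceq[OF mh, of \<omega>] Ceq[OF m0, of \<omega>] by (simp add: mh_def x_def X_def)
    have am: "- 2 * x \<le> b mh / K + K * x\<^sup>2 / b mh"
      by (rule amgm_aux[OF Kpos b0]) (simp add: x_def vz)
    have LQ: "Lh \<omega> = b mh + Q mh \<omega>" using Leq[OF mh] by (simp add: Lh_def mh_def)
    have Zq: "K * Z mh \<omega> = K * Q mh \<omega> + K * x\<^sup>2 / b mh" by (simp add: Z_def x_def algebra_simps)
    have kq: "(2 - 1/K) * Q mh \<omega> \<le> K * Q mh \<omega>"
    proof (intro mult_right_mono Q0)
      have "0 \<le> (K - 1)\<^sup>2 / K" using Kpos by simp
      also have "(K - 1)\<^sup>2 / K = K - (2 - 1/K)" using Kpos by (simp add: power2_eq_square field_simps)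
      finally show "2 - 1/K \<le> K" by simp
    qed
    have e1: "(1 - 1/K) * Lh \<omega> = b mh - b mh / K + (1 - 1/K) * Q mh \<omega>"
      using LQ by (simp add: algebra_simps)
    have e2: "(2 - 1/K) * Q mh \<omega> = Q mh \<omega> + (1 - 1/K) * Q mh \<omega>" by (simp add: algebra_simps)
    show ?thesis
      using crit am Zq kq e1 e2 Q0[of m0 \<omega>] unfolding mh_def[symmetric] X_def[symmetric] by linarith
  qed
  have per: "(\<integral>\<^sup>+\<omega>. ennreal (Lh \<omega>) \<partial>M) \<le> ennreal ((b m0 + pen m0 + 4 * K * \<sigma>\<^sup>2 * \<Sigma>) * (K / (K - 1)))"
    if m0: "m0 \<in> \<M>" for m0
  proof -
    define X where "X \<omega> = 2 * inner (v m0) (\<xi> \<omega>)" for \<omega>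
    define c where "c = b m0 + pen m0"
    have c0: "c \<ge> 0" using b0 assms(15)[OF m0] by (simp add: c_def)
    have Xmeas[measurable]: "X \<in> borel_measurable M" unfolding X_def by measurable
    have Xint: "integrable M X" unfolding X_def by (intro integrable_mult_right inner_integrable)
    have X0: "integral\<^sup>L M X = 0" unfolding X_def by (simp add: inner_mean)
    have K1: "1 - 1/K \<ge> 0" using assms(14) by (simp add: field_simps)
    have pw: "ennreal ((1 - 1/K) * Lh \<omega>) + ennreal (- X \<omega>) \<le> ennreal c + ennreal (X \<omega>) + G \<omega>" for \<omega>
    proof -
      define H where "H = K * Z (mhat \<omega>) \<omega> - pen (mhat \<omega>)"
      have d: "(1 - 1/K) * Lh \<omega> \<le> c + X \<omega> + H"
        using det[OF m0, of \<omega>] by (simp add: c_def X_def H_def)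
      have a0: "(1 - 1/K) * Lh \<omega> \<ge> 0" using K1 Lh0 by simp
      have "ennreal ((1 - 1/K) * Lh \<omega>) + ennreal (- X \<omega>) = ennreal ((1 - 1/K) * Lh \<omega> + max (- X \<omega>) 0)"
        using a0 by (cases "X \<omega> \<le> 0") (auto simp: ennreal_neg simp flip: ennreal_plus)
      also have "\<dots> \<le> ennreal (c + max (X \<omega>) 0 + max H 0)"
        using d by (intro ennreal_leI) (auto simp: max_def)
      also have "\<dots> = ennreal c + ennreal (X \<omega>) + ennreal H"
        using c0 by (cases "X \<omega> \<le> 0"; cases "H \<le> 0") (auto simp: ennreal_neg max_def)
      also have "ennreal H \<le> G \<omega>"
        unfolding G_def H_def using point_le_count[OF assms(17), of "\<lambda>m. g m \<omega>"] by (simp add: g_def)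
      finally show ?thesis by (simp add: add_left_mono)
    qed
    have "(\<integral>\<^sup>+\<omega>. ennreal ((1 - 1/K) * Lh \<omega>) + ennreal (- X \<omega>) \<partial>M) \<le> (\<integral>\<^sup>+\<omega>. ennreal c + ennreal (X \<omega>) + G \<omega> \<partial>M)"
      by (intro nn_integral_mono pw)
    moreover have "(\<integral>\<^sup>+\<omega>. ennreal ((1 - 1/K) * Lh \<omega>) + ennreal (- X \<omega>) \<partial>M)
        = ennreal (1 - 1/K) * (\<integral>\<^sup>+\<omega>. ennreal (Lh \<omega>) \<partial>M) + (\<integral>\<^sup>+\<omega>. ennreal (- X \<omega>) \<partial>M)"
    proof -
      have "(\<integral>\<^sup>+\<omega>. ennreal ((1 - 1/K) * Lh \<omega>) + ennreal (- X \<omega>) \<partial>M)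
          = (\<integral>\<^sup>+\<omega>. ennreal ((1 - 1/K) * Lh \<omega>) \<partial>M) + (\<integral>\<^sup>+\<omega>. ennreal (- X \<omega>) \<partial>M)"
        by (intro nn_integral_add enn_meas borel_measurable_times borel_measurable_uminus Lhmeas Xmeas borel_measurable_const)
      also have "(\<integral>\<^sup>+\<omega>. ennreal ((1 - 1/K) * Lh \<omega>) \<partial>M) = (\<integral>\<^sup>+\<omega>. ennreal (1 - 1/K) * ennreal (Lh \<omega>) \<partial>M)"
        using K1 by (simp add: ennreal_mult')
      also have "\<dots> = ennreal (1 - 1/K) * (\<integral>\<^sup>+\<omega>. ennreal (Lh \<omega>) \<partial>M)"
        by (intro nn_integral_cmult enn_meas Lhmeas)
      finally show ?thesis .
    qed
    moreover have "(\<integral>\<^sup>+\<omega>. ennreal c + ennreal (X \<omega>) + G \<omega> \<partial>M)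
        = ennreal c + (\<integral>\<^sup>+\<omega>. ennreal (X \<omega>) \<partial>M) + (\<integral>\<^sup>+\<omega>. G \<omega> \<partial>M)"
    proof -
      have "(\<integral>\<^sup>+\<omega>. ennreal c + ennreal (X \<omega>) + G \<omega> \<partial>M)
          = (\<integral>\<^sup>+\<omega>. ennreal c + ennreal (X \<omega>) \<partial>M) + (\<integral>\<^sup>+\<omega>. G \<omega> \<partial>M)"
        by (intro nn_integral_add borel_measurable_add borel_measurable_const enn_meas Xmeas Gmeas)
      also have "(\<integral>\<^sup>+\<omega>. ennreal c + ennreal (X \<omega>) \<partial>M) = (\<integral>\<^sup>+\<omega>. ennreal c \<partial>M) + (\<integral>\<^sup>+\<omega>. ennreal (X \<omega>) \<partial>M)"
        by (intro nn_integral_add borel_measurable_const enn_meas Xmeas)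
      also have "(\<integral>\<^sup>+\<omega>. ennreal c \<partial>M) = ennreal c" by (simp add: emeasure_space_1)
      finally show ?thesis .
    qed
    moreover have PN: "(\<integral>\<^sup>+\<omega>. ennreal (X \<omega>) \<partial>M) = (\<integral>\<^sup>+\<omega>. ennreal (- X \<omega>) \<partial>M)"
      and Nfin: "(\<integral>\<^sup>+\<omega>. ennreal (- X \<omega>) \<partial>M) < \<infinity>"
    proof -
      have nb: "(\<integral>\<^sup>+\<omega>. ennreal (norm (X \<omega>)) \<partial>M) < \<infinity>" using integrable_iff_bounded[THEN iffD1, OF Xint] by blast
      have Pf: "(\<integral>\<^sup>+\<omega>. ennreal (X \<omega>) \<partial>M) < \<infinity>"
        by (rule le_less_trans[OF nn_integral_mono nb]) (simp add: ennreal_leI)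
      show Nf: "(\<integral>\<^sup>+\<omega>. ennreal (- X \<omega>) \<partial>M) < \<infinity>"
        by (rule le_less_trans[OF nn_integral_mono nb]) (simp add: ennreal_leI)
      have eq: "enn2real (\<integral>\<^sup>+\<omega>. ennreal (X \<omega>) \<partial>M) = enn2real (\<integral>\<^sup>+\<omega>. ennreal (- X \<omega>) \<partial>M)"
        using real_lebesgue_integral_def[OF Xint] X0 by simp
      have "(\<integral>\<^sup>+\<omega>. ennreal (X \<omega>) \<partial>M) = ennreal (enn2real (\<integral>\<^sup>+\<omega>. ennreal (X \<omega>) \<partial>M))"
        using Pf by simp
      also have "\<dots> = ennreal (enn2real (\<integral>\<^sup>+\<omega>. ennreal (- X \<omega>) \<partial>M))" by (simp only: eq)
      also have "\<dots> = (\<integral>\<^sup>+\<omega>. ennreal (- X \<omega>) \<partial>M)" using Nf by simp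
      finally show "(\<integral>\<^sup>+\<omega>. ennreal (X \<omega>) \<partial>M) = (\<integral>\<^sup>+\<omega>. ennreal (- X \<omega>) \<partial>M)" .
    qed
    ultimately have "(\<integral>\<^sup>+\<omega>. ennreal (- X \<omega>) \<partial>M) + ennreal (1 - 1/K) * (\<integral>\<^sup>+\<omega>. ennreal (Lh \<omega>) \<partial>M)
        \<le> (\<integral>\<^sup>+\<omega>. ennreal (- X \<omega>) \<partial>M) + (ennreal c + (\<integral>\<^sup>+\<omega>. G \<omega> \<partial>M))"
      by (simp add: add_ac)
    then have "ennreal (1 - 1/K) * (\<integral>\<^sup>+\<omega>. ennreal (Lh \<omega>) \<partial>M) \<le> ennreal c + (\<integral>\<^sup>+\<omega>. G \<omega> \<partial>M)"
      using Nfin unfolding ennreal_add_left_cancel_le by auto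
    also have "\<dots> \<le> ennreal c + ennreal (4 * K * \<sigma>\<^sup>2 * \<Sigma>)" by (intro add_left_mono intG)
    also have "\<dots> = ennreal (c + 4 * K * \<sigma>\<^sup>2 * \<Sigma>)" using c0 Kpos \<Sigma>0 by simp
    finally have ineq: "ennreal (1 - 1/K) * (\<integral>\<^sup>+\<omega>. ennreal (Lh \<omega>) \<partial>M) \<le> ennreal (c + 4 * K * \<sigma>\<^sup>2 * \<Sigma>)" .
    have "(\<integral>\<^sup>+\<omega>. ennreal (Lh \<omega>) \<partial>M) = ennreal (K / (K - 1)) * (ennreal (1 - 1/K) * (\<integral>\<^sup>+\<omega>. ennreal (Lh \<omega>) \<partial>M))"
    proof -
      have "K / (K - 1) * (1 - 1/K) = 1" using assms(14) by (simp add: field_simps)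
      then have "ennreal (K / (K - 1)) * ennreal (1 - 1/K) = 1"
        using K1 assms(14) by (simp add: ennreal_mult[symmetric])
      then show ?thesis by (simp add: mult.assoc[symmetric])
    qed
    also have "\<dots> \<le> ennreal (K / (K - 1)) * ennreal (c + 4 * K * \<sigma>\<^sup>2 * \<Sigma>)"
      by (intro mult_left_mono ineq) simp
    also have "\<dots> = ennreal ((c + 4 * K * \<sigma>\<^sup>2 * \<Sigma>) * (K / (K - 1)))"
    proof -
      have "0 \<le> c + 4 * K * \<sigma>\<^sup>2 * \<Sigma>" using c0 Kpos \<Sigma>0 by simp
      moreover have "0 \<le> K / (K - 1)" using assms(14) by simp
      ultimately show ?thesis by (simp only: ennreal_mult[symmetric] mult.commute)
    qed
    finally show ?thesis by (simp add: c_def)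
  qed
  define C1 where "C1 = K * (K\<^sup>2 + K - 1) / (K - 1) ^ 3"
  define C2 where "C2 = K ^ 3 * kappa\<^sup>2 * \<sigma>\<^sup>2 / (K - 1)\<^sup>2"
  define val where "val m = integral\<^sup>L M (\<lambda>\<omega>. (norm (f - orth_proj (S m) (Y \<omega>)))\<^sup>2) + pen m" for m
  have C1pos: "C1 > 0"
  proof -
    have "K\<^sup>2 + K - 1 > 0" using assms(14) by (simp add: power2_eq_square) (smt (verit) mult_less_cancel_right1)
    moreover have "(K - 1) ^ 3 > 0" using assms(14) by simp
    ultimately show ?thesis unfolding C1_def using Kpos by simp
  qed
  have C1ge: "K / (K - 1) \<le> C1"
  proof -
    have "(K - 1)\<^sup>2 \<le> K\<^sup>2 + K - 1" using assms(14) by (simp add: power2_eq_square algebra_simps)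
    then have "K * (K - 1)\<^sup>2 \<le> K * (K\<^sup>2 + K - 1)" using Kpos by (intro mult_left_mono) auto
    then have "K * (K - 1)\<^sup>2 / (K - 1) ^ 3 \<le> K * (K\<^sup>2 + K - 1) / (K - 1) ^ 3"
      using assms(14) by (intro divide_right_mono) auto
    moreover have "K * (K - 1)\<^sup>2 / (K - 1) ^ 3 = K / (K - 1)"
      using assms(14) by (simp add: power2_eq_square power3_eq_cube)
    ultimately show ?thesis by (simp add: C1_def)
  qed
  have C2ge: "4 * K * \<sigma>\<^sup>2 * (K / (K - 1)) \<le> C2"
  proof -
    have "4 * (K - 1) \<le> 324 * K" using assms(14) by simp
    then have "(4 * (K - 1)) * (K\<^sup>2 * \<sigma>\<^sup>2) \<le> (324 * K) * (K\<^sup>2 * \<sigma>\<^sup>2)"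
      by (intro mult_right_mono) auto
    then have "(4 * (K - 1)) * (K\<^sup>2 * \<sigma>\<^sup>2) / (K - 1)\<^sup>2 \<le> (324 * K) * (K\<^sup>2 * \<sigma>\<^sup>2) / (K - 1)\<^sup>2"
      by (intro divide_right_mono) auto
    moreover have "(4 * (K - 1)) * (K\<^sup>2 * \<sigma>\<^sup>2) / (K - 1)\<^sup>2 = 4 * K * \<sigma>\<^sup>2 * (K / (K - 1))"
    proof -
      have ne: "K - 1 \<noteq> 0" using assms(14) by simp
      define q where "q = K - 1"
      have q: "q \<noteq> 0" "K = q + 1" using ne by (auto simp: q_def)
      show ?thesis unfolding q_def[symmetric] using q(1)
        by (simp add: power2_eq_square field_simps)
    qed
    moreover have "(324 * K) * (K\<^sup>2 * \<sigma>\<^sup>2) / (K - 1)\<^sup>2 = C2"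
      by (simp add: C2_def kappa_def power2_eq_square power3_eq_cube mult_ac)
    ultimately show ?thesis by simp
  qed
  have bnd: "(\<integral>\<^sup>+\<omega>. ennreal (Lh \<omega>) \<partial>M) \<le> ennreal (C1 * val m + C2 * \<Sigma>)" if m: "m \<in> \<M>" for m
  proof -
    have Lint: "integral\<^sup>L M (\<lambda>\<omega>. (norm (f - orth_proj (S m) (Y \<omega>)))\<^sup>2) = b m + integral\<^sup>L M (Q m)"
    proof -
      have "integral\<^sup>L M (\<lambda>\<omega>. (norm (f - orth_proj (S m) (Y \<omega>)))\<^sup>2) = integral\<^sup>L M (\<lambda>\<omega>. b m + Q m \<omega>)"
        using Leq[OF m] by (simp add: L_def)
      also have "\<dots> = b m + integral\<^sup>L M (Q m)"
      proof -
        have Qf: "Q m = (\<lambda>\<omega>. \<Sum>u\<in>B m. (inner u (\<xi> \<omega>))\<^sup>2)" by (rule ext) (simp add: Q_def)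
        show ?thesis using Q_integrable[OF onB(1)[OF m]] unfolding Qf by (simp add: prob_space)
      qed
      finally show ?thesis .
    qed
    have EQ0: "integral\<^sup>L M (Q m) \<ge> 0" by (intro integral_nonneg_AE) (simp add: Q0)
    have v1: "b m + pen m \<le> val m" using Lint EQ0 by (simp add: val_def)
    have v0: "0 \<le> b m + pen m" using b0 assms(15)[OF m] by simp
    have "(b m + pen m + 4 * K * \<sigma>\<^sup>2 * \<Sigma>) * (K / (K - 1))
        = (b m + pen m) * (K / (K - 1)) + (4 * K * \<sigma>\<^sup>2 * (K / (K - 1))) * \<Sigma>" by (simp add: algebra_simps add_divide_distrib)
    also have "\<dots> \<le> val m * C1 + C2 * \<Sigma>"
    proof (intro add_mono mult_right_mono mult_mono C1ge C2ge \<Sigma>0 v1 v0)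
      show "0 \<le> K / (K - 1)" using assms(14) by simp
      show "0 \<le> val m" using v0 v1 by simp
    qed
    finally have "(b m + pen m + 4 * K * \<sigma>\<^sup>2 * \<Sigma>) * (K / (K - 1)) \<le> C1 * val m + C2 * \<Sigma>"
      by (simp add: mult.commute)
    then show ?thesis using per[OF m] by (meson ennreal_leI order_trans)
  qed
  obtain m1 where m1: "m1 \<in> \<M>" using assms(10) by blast
  have fin: "(\<integral>\<^sup>+\<omega>. ennreal (Lh \<omega>) \<partial>M) < \<infinity>" using bnd[OF m1] by (simp add: le_less_trans)
  define l where "l = enn2real (\<integral>\<^sup>+\<omega>. ennreal (Lh \<omega>) \<partial>M)"
  have leq: "(\<integral>\<^sup>+\<omega>. ennreal (Lh \<omega>) \<partial>M) = ennreal l" using fin by (simp add: l_def)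
  have l0: "l \<ge> 0" by (simp add: l_def)
  have val0: "val m \<ge> 0" if "m \<in> \<M>" for m
    using assms(15)[OF that] by (simp add: val_def integral_nonneg_AE)
  have "(l - C2 * \<Sigma>) / C1 \<le> (\<Sqinter>m\<in>\<M>. val m)"
  proof (rule cINF_greatest[OF assms(10)])
    fix m assume m: "m \<in> \<M>"
    have "ennreal l \<le> ennreal (C1 * val m + C2 * \<Sigma>)" using bnd[OF m] leq by simp
    moreover have "0 \<le> C1 * val m + C2 * \<Sigma>"
    proof -
      have "0 \<le> 4 * K * \<sigma>\<^sup>2 * (K / (K - 1))" using Kpos assms(14) by simp
      then have "C2 \<ge> 0" using C2ge by linarith
      then show ?thesis using C1pos val0[OF m] \<Sigma>0 by simp
    qed
    ultimately have "l \<le> C1 * val m + C2 * \<Sigma>" by simp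
    then show "(l - C2 * \<Sigma>) / C1 \<le> val m" using C1pos by (simp add: field_simps)
  qed
  then have "l \<le> C1 * (\<Sqinter>m\<in>\<M>. val m) + C2 * \<Sigma>" using C1pos by (simp add: field_simps)
  then have "ennreal l \<le> ennreal (C1 * (\<Sqinter>m\<in>\<M>. val m) + C2 * \<Sigma>)" by (rule ennreal_leI)
  then show ?thesis
    using leq unfolding Lh_def L_def C1_def C2_def val_def \<Sigma>_def by simp
qed

end
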